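(* Let $n=2N$ or $n=2N+1$ and let $V=\mathbb{C}^n$ with basis $e_{\pm1},\dots,e_{\pm N}$ (together with an extra basis vector $e_0$ when $n=2N+1$), equipped with the nondegenerate symmetric bilinear form $B$ given by $B(e_\alpha,e_{-\alpha})=1$ for $\alpha=1,\dots,N$, $B(e_0,e_0)=1$ (when $n$ is odd), and all other pairings of basis vectors equal to $0$. Let $O(n)$ be the orthogonal group of $B$, let $\mathfrak h$ be the Cartan subalgebra of $\mathfrak{so}(n)$ consisting of the operators acting by $x_\alpha$ on $e_\alpha$, by $-x_\alpha$ on $e_{-\alpha}$ ($\alpha=1,\dots,N$) and by $0$ on $e_0$, and let $\mathrm N_{O(n)}(\mathfrak h)=\{g\in O(n): g\mathfrak h g^{-1}=\mathfrak h\}$. For a subset $\{a_1,\dots,a_l\}\subseteq\{1,\dots,N\}$ of $l$ distinct indices (read cyclically, $a_{l+1}=a_1$) and $\lambda\in\mathbb C^\times$, define: - $[l,\lambda]_+$ to be the operator with $e_{-a_i}\mapsto e^{i\pi(l-1)/l}\lambda\, e_{-a_{i+1}}$ and $e_{a_i}\mapsto e^{-i\pi(l-1)/l}\lambda^{-1}\, e_{a_{i+1}}$ for $i=1,\dots,l$, and identity on all other basis vectors; - $[l]_-$ to be the operator with $e_{a_1}\mapsto e_{a_2}\mapsto\dots\mapsto e_{a_l}\mapsto e_{-a_1}\mapsto e_{-a_2}\mapsto\dots\mapsto e_{-a_l}\mapsto e_{a_1}$, and identity on all other basis vectors; - for $n$ odd and $\epsilon\in\{\pm1\}$, $[\epsilon]$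 to be the operator $e_0\mapsto\epsilon e_0$, identity on all other basis vectors. Then every $g\in \mathrm N_{O(2N)}(\mathfrak h)$ is conjugate in $\mathrm N_{O(2N)}(\mathfrak h)$ to a product $\prod_{j=1}^K[l_j,\lambda_j]_+\cdot\prod_{j=1}^{K'}[l'_j]_-$ of such operators supported on pairwise disjoint index sets which together partition $\{1,\dots,N\}$ (so $\sum_j l_j+\sum_j l'_j=N$), for some $K,K'\ge0$, lengths $l_j,l'_j\ge1$ and $\lambda_j\in\mathbb C^\times$; and every $g\in \mathrm N_{O(2N+1)}(\mathfrak h)$ is conjugate in $\mathrm N_{O(2N+1)}(\mathfrak h)$ to a product $[\epsilon]\cdot\prod_{j=1}^K[l_j,\lambda_j]_+\cdot\prod_{j=1}^{K'}[l'_j]_-$ of the same form with some $\epsilon\in\{\pm1\}$.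
   Context: $\mathrm N_{O(2N)}(\mathfrak h)\cong S_N\ltimes(\mathbb Z/2\mathbb Z)^N\ltimes(\mathbb C^\times)^N$, where $S_N$ permutes the indices simultaneously on $e_\alpha$ and $e_{-\alpha}$, the $\alpha$-th factor $\mathbb Z/2\mathbb Z$ swaps $e_\alpha\leftrightarrow e_{-\alpha}$, and $(\lambda_\alpha)\in(\mathbb C^\times)^N$ acts by $e_\alpha\mapsto\lambda_\alpha e_\alpha$, $e_{-\alpha}\mapsto\lambda_\alpha^{-1}e_{-\alpha}$; and $\mathrm N_{O(2N+1)}(\mathfrak h)=\mathrm N_{O(2N)}(\mathfrak h)\times\mathbb Z/2\mathbb Z$, the last factor acting by $e_0\mapsto -e_0$. *)

theory Defs
  imports Complex_Main
begin

text \<open>Matrices on V = C^n are functions int => int => complex, entry (r,c) being the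
 coefficient of e_r in the image of e_c. Basis indices: -N..N without 0 (n = 2N, od = False)
 or with 0 (n = 2N+1, od = True).\<close>

type_synonym cmat = "int \<Rightarrow> int \<Rightarrow> complex"

definition idx :: "nat \<Rightarrow> bool \<Rightarrow> int set" where
  "idx N od = {- int N .. int N} - (if od then {} else {0})"

definition Mat :: "nat \<Rightarrow> bool \<Rightarrow> cmat set" where
  "Mat N od = {A. \<forall>i j. (i \<notin> idx N od \<or> j \<notin> idx N od) \<longrightarrow> A i j = 0}"

definition mmul :: "nat \<Rightarrow> bool \<Rightarrow> cmat \<Rightarrow> cmat \<Rightarrow> cmat" where
  "mmul N od A C = (\<lambda>i j. \<Sum>k\<in>idx N od. A i k * C k j)"

definition Imat :: "nat \<Rightarrow> bool \<Rightarrow> cmat" where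
  "Imat N od = (\<lambda>i j. if i \<in> idx N od \<and> i = j then 1 else 0)"

definition Bmat :: "nat \<Rightarrow> bool \<Rightarrow> cmat" where
  "Bmat N od = (\<lambda>i j. if i \<in> idx N od \<and> j \<in> idx N od \<and> i = - j then 1 else 0)"

definition is_inv :: "nat \<Rightarrow> bool \<Rightarrow> cmat \<Rightarrow> cmat \<Rightarrow> bool" where
  "is_inv N od A A' \<longleftrightarrow> A' \<in> Mat N od \<and> mmul N od A A' = Imat N od \<and> mmul N od A' A = Imat N od"

definition Orth :: "nat \<Rightarrow> bool \<Rightarrow> cmat set" where
  "Orth N od = {g \<in> Mat N od. (\<exists>g'. is_inv N od g g') \<and>
     (\<forall>i\<in>idx N od. \<forall>j\<in>idx N od.
        (\<Sum>k\<in>idx N od. \<Sum>m\<in>idx N od. g k i * Bmat N od k m * g m j) = Bmat N od i j)}"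

definition hset :: "nat \<Rightarrow> bool \<Rightarrow> cmat set" where
  "hset N od = {A. \<exists>x :: int \<Rightarrow> complex. (\<forall>a. x (- a) = - x a) \<and>
      A = (\<lambda>i j. if i \<in> idx N od \<and> j = i then x i else 0)}"

definition NormO :: "nat \<Rightarrow> bool \<Rightarrow> cmat set" where
  "NormO N od = {g \<in> Orth N od. \<exists>g'. is_inv N od g g' \<and>
      (\<lambda>H. mmul N od (mmul N od g H) g') ` hset N od = hset N od}"

definition conj_in_Norm :: "nat \<Rightarrow> bool \<Rightarrow> cmat \<Rightarrow> cmat \<Rightarrow> bool" where
  "conj_in_Norm N od g t \<longleftrightarrow> (\<exists>h h'. h \<in> NormO N od \<and> is_inv N od h h' \<and>
      mmul N od (mmul N od h g) h' = t)"

text \<open>Monomial operator: basis vector e_c is sent to fst (f c) * e_{snd (f c)}.\<close>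
definition basis_op :: "nat \<Rightarrow> bool \<Rightarrow> (int \<Rightarrow> complex \<times> int) \<Rightarrow> cmat" where
  "basis_op N od f = (\<lambda>r c. if r \<in> idx N od \<and> c \<in> idx N od \<and> r = snd (f c) then fst (f c) else 0)"

text \<open>Cyclic successor within the list [a_1,...,a_l] (a_{l+1} = a_1).\<close>
definition succ_in :: "int list \<Rightarrow> int \<Rightarrow> int" where
  "succ_in as a = the (map_of (zip as (rotate1 as)) a)"

definition plus_op :: "nat \<Rightarrow> bool \<Rightarrow> int list \<Rightarrow> complex \<Rightarrow> cmat" where
  "plus_op N od as c = basis_op N od (\<lambda>v.
     let l = real (length as) in
     if - v \<in> set as then (exp (\<i> * complex_of_real (pi * (l - 1) / l)) * c, - succ_in as (- v))
     else if v \<in> set as then (exp (- \<i> * complex_of_real (pi * (l - 1) / l)) * inverse c, succ_in as v)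
     else (1, v))"

definition minus_op :: "nat \<Rightarrow> bool \<Rightarrow> int list \<Rightarrow> cmat" where
  "minus_op N od as = basis_op N od (\<lambda>v.
     if v \<in> set as then (if v = last as then (1, - hd as) else (1, succ_in as v))
     else if - v \<in> set as then (if - v = last as then (1, hd as) else (1, - succ_in as (- v)))
     else (1, v))"

definition eps_op :: "nat \<Rightarrow> bool \<Rightarrow> complex \<Rightarrow> cmat" where
  "eps_op N od e = basis_op N od (\<lambda>v. if v = 0 then (e, 0) else (1, v))"

definition listprod :: "nat \<Rightarrow> bool \<Rightarrow> cmat list \<Rightarrow> cmat" where
  "listprod N od ms = foldr (mmul N od) ms (Imat N od)"

end

theory Submission
  imports Defs
begin


definition compf :: "(int \<Rightarrow> complex \<times> int) \<Rightarrow> (int \<Rightarrow> complex \<times> int) \<Rightarrow> int \<Rightarrow> complex \<times> int" where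
  "compf f g c = (fst (f (snd (g c))) * fst (g c), snd (f (snd (g c))))"

lemma finite_idx[simp]: "finite (idx N od)"
  by (simp add: idx_def)

lemma idx_uminus[simp]: "(- x \<in> idx N od) = (x \<in> idx N od)"
  by (auto simp: idx_def)

lemma basis_op_mul:
  assumes "\<forall>c\<in>idx N od. snd (g c) \<in> idx N od"
  shows "mmul N od (basis_op N od f) (basis_op N od g) = basis_op N od (compf f g)"
proof (rule ext, rule ext)
  fix r c
  show "mmul N od (basis_op N od f) (basis_op N od g) r c = basis_op N od (compf f g) r c"
  proof (cases "c \<in> idx N od")
    case False
    then show ?thesis by (simp add: mmul_def basis_op_def)
  next
    case True
    have "mmul N od (basis_op N od f) (basis_op N od g) r c =
      (\<Sum>k\<in>idx N od. if k = snd (g c) then (if r \<in> idx N od \<and> r = snd (f k) then fst (f k) else 0) * fst (g c) else 0)"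
      unfolding mmul_def basis_op_def using True by (intro sum.cong) auto
    also have "\<dots> = basis_op N od (compf f g) r c"
      using True assms by (auto simp add: basis_op_def compf_def)
    finally show ?thesis .
  qed
qed

lemma basis_op_cong:
  assumes "\<forall>c\<in>idx N od. f c = f' c"
  shows "basis_op N od f = basis_op N od f'"
  using assms by (auto simp: basis_op_def fun_eq_iff)

lemma Imat_basis: "Imat N od = basis_op N od (\<lambda>c. (1, c))"
  by (auto simp: Imat_def basis_op_def fun_eq_iff)

lemma basis_op_Mat[simp]: "basis_op N od f \<in> Mat N od"
  by (auto simp: Mat_def basis_op_def)

lemma mmul_assoc: "mmul N od (mmul N od A B) C = mmul N od A (mmul N od B C)"
  unfolding mmul_def
  by (auto simp: fun_eq_iff sum_distrib_left sum_distrib_right mult.assoc intro: sum.swap)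

lemma mmul_I_right: "A \<in> Mat N od \<Longrightarrow> mmul N od A (Imat N od) = A"
  by (auto simp: fun_eq_iff mmul_def Imat_def Mat_def if_distrib cong: if_cong)

lemma mmul_I_left:
  assumes "A \<in> Mat N od" shows "mmul N od (Imat N od) A = A"
proof (rule ext, rule ext)
  fix i j
  have "mmul N od (Imat N od) A i j = (\<Sum>k\<in>idx N od. if k = i then A i j else 0)"
    unfolding mmul_def Imat_def by (intro sum.cong) auto
  also have "\<dots> = A i j" using assms by (auto simp: Mat_def)
  finally show "mmul N od (Imat N od) A i j = A i j" .
qed




definition diag :: "nat \<Rightarrow> bool \<Rightarrow> (int \<Rightarrow> complex) \<Rightarrow> cmat" where
  "diag N od x = basis_op N od (\<lambda>c. (x c, c))"

lemma hset_diag: "hset N od = {diag N od x | x. \<forall>a. x (- a) = - x a}"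
  unfolding hset_def diag_def basis_op_def by (auto simp: fun_eq_iff)

lemma mmul_diag_right: "mmul N od A (diag N od x) r c = (if c \<in> idx N od then A r c * x c else 0)"
proof -
  have "mmul N od A (diag N od x) r c = (\<Sum>k\<in>idx N od. if k = c then (if c \<in> idx N od then A r c * x c else 0) else 0)"
    unfolding mmul_def diag_def basis_op_def by (intro sum.cong) auto
  then show ?thesis by auto
qed

lemma mmul_diag_left: "mmul N od (diag N od x) A r c = (if r \<in> idx N od then x r * A r c else 0)"
proof -
  have "mmul N od (diag N od x) A r c = (\<Sum>k\<in>idx N od. if k = r then (if r \<in> idx N od then x r * A r c else 0) else 0)"
    unfolding mmul_def diag_def basis_op_def by (intro sum.cong) auto
  then show ?thesis by auto
qed

lemma mmul_basis_right:
  assumes "\<forall>c\<in>idx N od. snd (f c) \<in> idx N od"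
  shows "mmul N od A (basis_op N od f) r c = (if c \<in> idx N od then A r (snd (f c)) * fst (f c) else 0)"
proof -
  have "mmul N od A (basis_op N od f) r c = (\<Sum>k\<in>idx N od. if k = snd (f c) then (if c \<in> idx N od then A r (snd (f c)) * fst (f c) else 0) else 0)"
    unfolding mmul_def basis_op_def by (intro sum.cong) auto
  then show ?thesis using assms by auto
qed

lemma mmul_Mat: "A \<in> Mat N od \<Longrightarrow> B \<in> Mat N od \<Longrightarrow> mmul N od A B \<in> Mat N od"
  by (auto simp: Mat_def mmul_def)

lemma dsum_basis:
  assumes "\<forall>c\<in>idx N od. snd (f c) \<in> idx N od" "i \<in> idx N od" "j \<in> idx N od"
  shows "(\<Sum>k\<in>idx N od. \<Sum>m\<in>idx N od. basis_op N od f k i * Bm k m * basis_op N od f m j)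
        = fst (f i) * Bm (snd (f i)) (snd (f j)) * fst (f j)"
proof -
  have inner: "(\<Sum>m\<in>idx N od. basis_op N od f k i * Bm k m * basis_op N od f m j)
     = (\<Sum>m\<in>idx N od. if m = snd (f j) then basis_op N od f k i * Bm k (snd (f j)) * fst (f j) else 0)" for k
    unfolding basis_op_def using assms by (intro sum.cong) auto
  have "(\<Sum>k\<in>idx N od. \<Sum>m\<in>idx N od. basis_op N od f k i * Bm k m * basis_op N od f m j)
     = (\<Sum>k\<in>idx N od. basis_op N od f k i * Bm k (snd (f j)) * fst (f j))"
    unfolding inner using assms by simp
  also have "\<dots> = (\<Sum>k\<in>idx N od. if k = snd (f i) then fst (f i) * Bm (snd (f i)) (snd (f j)) * fst (f j) else 0)"
    unfolding basis_op_def using assms by (intro sum.cong) auto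
  finally show ?thesis using assms by simp
qed

lemma NormO_monomial:
  assumes g: "g \<in> NormO N od"
  obtains \<sigma> \<mu> where "inj \<sigma>" "\<forall>x. \<sigma> (- x) = - \<sigma> x" "\<forall>c\<in>idx N od. \<sigma> c \<in> idx N od"
    "\<forall>c. c \<notin> idx N od \<longrightarrow> \<sigma> c = c"
    "g = basis_op N od (\<lambda>c. (\<mu> c, \<sigma> c))" "\<forall>c\<in>idx N od. \<mu> c * \<mu> (- c) = 1"
proof -
  let ?I = "idx N od"
  from g obtain g' where gO: "g \<in> Orth N od" and inv: "is_inv N od g g'"
    and img: "(\<lambda>H. mmul N od (mmul N od g H) g') ` hset N od = hset N od"
    unfolding NormO_def by blast
  have gM: "g \<in> Mat N od" using gO by (simp add: Orth_def)
  have g'g: "mmul N od g' g = Imat N od" and g'M: "g' \<in> Mat N od" using inv by (auto simp: is_inv_def)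
  define D where "D = diag N od (\<lambda>c. of_int c)"
  have "D \<in> hset N od" unfolding hset_diag D_def by auto
  then have "D \<in> (\<lambda>H. mmul N od (mmul N od g H) g') ` hset N od" using img by simp
  then obtain H where "H \<in> hset N od" and eqH: "mmul N od (mmul N od g H) g' = D" by blast
  then obtain x0 where x0: "\<forall>a. x0 (- a) = - x0 a" and "H = diag N od x0"
    by (auto simp: hset_diag)
  with eqH have eqD: "mmul N od (mmul N od g (diag N od x0)) g' = D" by simp
  have "mmul N od D g = mmul N od (mmul N od g (diag N od x0)) (mmul N od g' g)"
    by (simp add: eqD[symmetric] mmul_assoc)
  also have "\<dots> = mmul N od g (diag N od x0)"
    using g'g gM by (simp add: mmul_I_right mmul_Mat diag_def)
  finally have comm: "mmul N od D g = mmul N od g (diag N od x0)" .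
  have key: "g r c \<noteq> 0 \<Longrightarrow> r \<in> ?I \<Longrightarrow> c \<in> ?I \<Longrightarrow> x0 c = of_int r" for r c
  proof -
    assume "g r c \<noteq> 0" "r \<in> ?I" "c \<in> ?I"
    have "mmul N od D g r c = mmul N od g (diag N od x0) r c" using comm by simp
    then have "of_int r * g r c = g r c * x0 c" using \<open>r \<in> ?I\<close> \<open>c \<in> ?I\<close>
      unfolding D_def by (simp add: mmul_diag_left mmul_diag_right)
    then show ?thesis using \<open>g r c \<noteq> 0\<close> by simp
  qed
  have uniq: "r1 \<in> ?I \<Longrightarrow> r2 \<in> ?I \<Longrightarrow> c \<in> ?I \<Longrightarrow> g r1 c \<noteq> 0 \<Longrightarrow> g r2 c \<noteq> 0 \<Longrightarrow> r1 = r2" for r1 r2 c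
    using key[of r1 c] key[of r2 c] by simp
  have ex: "\<exists>r\<in>?I. g r c \<noteq> 0" if c: "c \<in> ?I" for c
  proof (rule ccontr)
    assume "\<not> ?thesis"
    then have "mmul N od g' g c c = 0" unfolding mmul_def by simp
    moreover have "mmul N od g' g c c = 1" using g'g c by (simp add: Imat_def)
    ultimately show False by simp
  qed
  define \<sigma> where "\<sigma> c = (if c \<in> ?I then (THE r. r \<in> ?I \<and> g r c \<noteq> 0) else c)" for c
  define \<mu> where "\<mu> c = g (\<sigma> c) c" for c
  have sig: "\<sigma> c \<in> ?I \<and> g (\<sigma> c) c \<noteq> 0" if "c \<in> ?I" for c
  proof -
    have "\<exists>!r. r \<in> ?I \<and> g r c \<noteq> 0" using ex[OF that] uniq[OF _ _ that] by blast
    then have "(THE r. r \<in> ?I \<and> g r c \<noteq> 0) \<in> ?I \<and> g (THE r. r \<in> ?I \<and> g r c \<noteq> 0) c \<noteq> 0"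
      by (rule theI')
    then show ?thesis unfolding \<sigma>_def using that by simp
  qed
  have sig2: "r = \<sigma> c" if "c \<in> ?I" "r \<in> ?I" "g r c \<noteq> 0" for r c
    using sig[OF that(1)] uniq[OF that(2) _ that(1) that(3)] by blast
  have sigI: "\<forall>c\<in>?I. \<sigma> c \<in> ?I" using sig by blast
  have geq: "g = basis_op N od (\<lambda>c. (\<mu> c, \<sigma> c))"
  proof (rule ext, rule ext)
    fix r c
    show "g r c = basis_op N od (\<lambda>c. (\<mu> c, \<sigma> c)) r c"
    proof (cases "r \<in> ?I \<and> c \<in> ?I")
      case True
      then show ?thesis using sig2[of c r] by (auto simp: basis_op_def \<mu>_def)
    next
      case False
      then show ?thesis using gM by (auto simp: basis_op_def Mat_def)
    qed
  qed
  have injI0: "inj_on \<sigma> ?I"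
  proof (rule inj_onI, rule ccontr)
    fix c1 c2 assume c: "c1 \<in> ?I" "c2 \<in> ?I" "\<sigma> c1 = \<sigma> c2" "c1 \<noteq> c2"
    have m: "mmul N od g' g a b = (if b \<in> ?I then g' a (\<sigma> b) * \<mu> b else 0)" for a b
      by (subst geq) (simp add: mmul_basis_right sigI)
    have "mmul N od g' g c2 c1 = 0" using g'g c by (simp add: Imat_def)
    then have "g' c2 (\<sigma> c2) = 0" using m[of c2 c1] c sig[of c1] by (simp add: \<mu>_def)
    moreover have "mmul N od g' g c2 c2 = 1" using g'g c by (simp add: Imat_def)
    ultimately show False using m[of c2 c2] c by simp
  qed
  have imI: "\<sigma> ` ?I = ?I" using endo_inj_surj[OF finite_idx _ injI0] sigI by blast
  have injs: "inj \<sigma>"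
  proof (rule injI)
    fix x y assume "\<sigma> x = \<sigma> y"
    then show "x = y" using injI0 sigI unfolding inj_on_def
      by (cases "x \<in> ?I"; cases "y \<in> ?I") (auto simp: \<sigma>_def[of x] \<sigma>_def[of y] split: if_splits)
  qed
  have orth: "\<sigma> c = - \<sigma> (- c) \<and> \<mu> c * \<mu> (- c) = 1" if c: "c \<in> ?I" for c
  proof -
    have "(\<Sum>k\<in>?I. \<Sum>m\<in>?I. g k c * Bmat N od k m * g m (- c)) = Bmat N od c (- c)"
      using gO c unfolding Orth_def by auto
    then have "\<mu> c * Bmat N od (\<sigma> c) (\<sigma> (- c)) * \<mu> (- c) = 1"
      using c by (subst (asm) (1 2) geq) (simp add: dsum_basis sigI, simp add: Bmat_def)
    then show ?thesis using c sigI by (auto simp: Bmat_def split: if_splits)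
  qed
  have neg: "\<forall>x. \<sigma> (- x) = - \<sigma> x"
  proof
    fix x show "\<sigma> (- x) = - \<sigma> x"
    proof (cases "x \<in> ?I")
      case True then show ?thesis using orth[of x] by simp
    next
      case False then show ?thesis by (simp add: \<sigma>_def)
    qed
  qed
  show ?thesis
    by (rule that[OF injs neg sigI _ geq]) (auto simp: \<sigma>_def orth)
qed




lemma conj_mono:
  assumes sg1: "\<forall>x. sg x \<in> {1,-1}" and sg2: "\<forall>x. sg (-x) = sg x"
    and nu1: "\<forall>x. \<nu> x \<noteq> 0" and nu2: "\<forall>x. \<nu> (-x) * \<nu> x = 1"
  shows "basis_op N od (\<lambda>c. (\<nu> c, sg c * c)) \<in> NormO N od \<and>
         is_inv N od (basis_op N od (\<lambda>c. (\<nu> c, sg c * c))) (basis_op N od (\<lambda>c. (1 / \<nu> (sg c * c), sg c * c)))"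
proof -
  define \<tau> where "\<tau> c = sg c * c" for c :: int
  define h where "h = basis_op N od (\<lambda>c. (\<nu> c, \<tau> c))"
  define h' where "h' = basis_op N od (\<lambda>c. (1 / \<nu> (\<tau> c), \<tau> c))"
  have tt: "\<tau> (\<tau> c) = c" for c
  proof -
    have "sg (\<tau> c) = sg c" using sg1 sg2 unfolding \<tau>_def by (metis insertE mult_1 mult_minus1 singletonD)
    then show ?thesis using sg1 unfolding \<tau>_def by (metis insertE mult_1 mult_minus1 singletonD mult.assoc minus_mult_minus mult_1_right)
  qed
  have tneg: "\<tau> (- c) = - \<tau> c" for c using sg2 by (simp add: \<tau>_def)
  have tI: "\<tau> c \<in> idx N od" if "c \<in> idx N od" for c
    using sg1 that unfolding \<tau>_def by (metis idx_uminus insertE mult_1 mult_minus1 singletonD)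
  have tI': "\<forall>c\<in>idx N od. snd ((\<lambda>c. (a c, \<tau> c)) c) \<in> idx N od" for a :: "int \<Rightarrow> complex"
    using tI by simp
  have inv: "is_inv N od h h'"
    unfolding is_inv_def h_def h'_def
    using nu1 tt tI' by (auto simp: basis_op_mul Imat_basis compf_def intro!: basis_op_cong)
  have orth: "h \<in> Orth N od"
  proof -
    have "(\<Sum>k\<in>idx N od. \<Sum>m\<in>idx N od. h k i * Bmat N od k m * h m j) = Bmat N od i j"
      if ij: "i \<in> idx N od" "j \<in> idx N od" for i j
    proof -
      have "(\<tau> i = - \<tau> j) = (i = - j)" using tt tneg by metis
      moreover have "\<nu> (- j) * \<nu> j = 1" using nu2 by simp
      ultimately show ?thesis unfolding h_def using ij tI'
        by (simp add: dsum_basis, simp add: Bmat_def tI)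
    qed
    then show ?thesis using inv unfolding Orth_def h_def by auto
  qed
  have conjd: "mmul N od (mmul N od h (diag N od x)) h' = diag N od (\<lambda>c. x (\<tau> c))" for x
    unfolding h_def h'_def diag_def
    using nu1 tt tI' by (auto simp: basis_op_mul compf_def idx_def intro!: basis_op_cong)
  have "(\<lambda>H. mmul N od (mmul N od h H) h') ` hset N od = hset N od"
  proof
    show "(\<lambda>H. mmul N od (mmul N od h H) h') ` hset N od \<subseteq> hset N od"
      using tneg by (auto simp: hset_diag conjd)
    show "hset N od \<subseteq> (\<lambda>H. mmul N od (mmul N od h H) h') ` hset N od"
    proof
      fix H assume "H \<in> hset N od"
      then obtain y where y: "\<forall>a. y (-a) = - y a" "H = diag N od y" by (auto simp: hset_diag)
      have "H = mmul N od (mmul N od h (diag N od (\<lambda>c. y (\<tau> c)))) h'"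
        using y tt by (simp add: conjd)
      moreover have "diag N od (\<lambda>c. y (\<tau> c)) \<in> hset N od" using y tneg by (auto simp: hset_diag)
      ultimately show "H \<in> (\<lambda>H. mmul N od (mmul N od h H) h') ` hset N od" by blast
    qed
  qed
  then have "h \<in> NormO N od" using orth inv unfolding NormO_def by blast
  then show ?thesis using inv unfolding h_def h'_def \<tau>_def by simp
qed




definition pm :: "int set \<Rightarrow> int set" where "pm A = A \<union> uminus ` A"

definition plusf :: "int list \<Rightarrow> complex \<Rightarrow> int \<Rightarrow> complex \<times> int" where
  "plusf as c = (\<lambda>v.
     let l = real (length as) in
     if - v \<in> set as then (exp (\<i> * complex_of_real (pi * (l - 1) / l)) * c, - succ_in as (- v))
     else if v \<in> set as then (exp (- \<i> * complex_of_real (pi * (l - 1) / l)) * inverse c, succ_in as v)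
     else (1, v))"

definition minusf :: "int list \<Rightarrow> int \<Rightarrow> complex \<times> int" where
  "minusf as = (\<lambda>v.
     if v \<in> set as then (if v = last as then (1, - hd as) else (1, succ_in as v))
     else if - v \<in> set as then (if - v = last as then (1, hd as) else (1, - succ_in as (- v)))
     else (1, v))"

lemma plus_op_eq: "plus_op N od as c = basis_op N od (plusf as c)"
  unfolding plus_op_def plusf_def ..
lemma minus_op_eq: "minus_op N od as = basis_op N od (minusf as)"
  unfolding minus_op_def minusf_def ..

fun FP :: "(int list \<times> complex) list \<Rightarrow> int \<Rightarrow> complex \<times> int" where
  "FP [] x = (1, x)"
| "FP ((as, c) # P) x = (if x \<in> pm (set as) then plusf as c x else FP P x)"

fun FM :: "int list list \<Rightarrow> int \<Rightarrow> complex \<times> int" where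
  "FM [] x = (1, x)"
| "FM (as # M) x = (if x \<in> pm (set as) then minusf as x else FM M x)"

definition FF :: "(int list \<times> complex) list \<Rightarrow> int list list \<Rightarrow> int \<Rightarrow> complex \<times> int" where
  "FF P M x = (if x \<in> pm (set (concat (map fst P))) then FP P x else FM M x)"

lemma pm_disj: "A \<subseteq> {0<..} \<Longrightarrow> B \<subseteq> {0<..} \<Longrightarrow> A \<inter> B = {} \<Longrightarrow> pm A \<inter> pm B = {}"
  unfolding pm_def by force

lemma pm_idx: "A \<subseteq> {1..int N} \<Longrightarrow> pm A \<subseteq> idx N od"
  unfolding pm_def idx_def by force

lemma pm_union: "pm (A \<union> B) = pm A \<union> pm B"
  unfolding pm_def by auto

lemma compf_disj:
  assumes "\<forall>x. x \<notin> A \<longrightarrow> f x = (1, x)" "\<forall>x. x \<notin> B \<longrightarrow> g x = (1, x)"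
    "\<forall>x\<in>B. snd (g x) \<in> B" "A \<inter> B = {}"
  shows "compf f g c = (if c \<in> A then f c else g c)"
  using assms by (cases "c \<in> B") (auto simp: compf_def prod_eq_iff)

lemma succ_in_set: assumes "a \<in> set as" shows "succ_in as a \<in> set as"
proof -
  have "map_of (zip as (rotate1 as)) a \<noteq> None"
    using assms by (simp add: map_of_eq_None_iff) (metis length_rotate1 map_fst_zip set_map)
  then obtain y where y: "map_of (zip as (rotate1 as)) a = Some y" by blast
  then have "(a, y) \<in> set (zip as (rotate1 as))" by (rule map_of_SomeD)
  then have "y \<in> set as" by (auto dest: set_zip_rightD)
  then show ?thesis using y by (simp add: succ_in_def)
qed

lemma plusf_id: "x \<notin> pm (set as) \<Longrightarrow> plusf as c x = (1, x)"
  unfolding plusf_def pm_def Let_def using rev_image_eqI[of "-x" "set as" x uminus] by auto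

lemma plusf_in: "x \<in> pm (set as) \<Longrightarrow> snd (plusf as c x) \<in> pm (set as)"
  unfolding plusf_def pm_def Let_def by (auto simp: succ_in_set)

lemma minusf_id: "x \<notin> pm (set as) \<Longrightarrow> minusf as x = (1, x)"
  unfolding minusf_def pm_def using rev_image_eqI[of "-x" "set as" x uminus] by auto

lemma minusf_in: "x \<in> pm (set as) \<Longrightarrow> snd (minusf as x) \<in> pm (set as)"
  unfolding minusf_def pm_def by (cases "as = []") (auto simp: succ_in_set hd_in_set last_in_set)

lemma FP_id: "x \<notin> pm (set (concat (map fst P))) \<Longrightarrow> FP P x = (1, x)"
  by (induction P x rule: FP.induct) (auto simp: pm_union plusf_id)

lemma FP_in: "x \<in> pm (set (concat (map fst P))) \<Longrightarrow> snd (FP P x) \<in> pm (set (concat (map fst P)))"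
  by (induction P x rule: FP.induct) (auto simp: pm_union plusf_in FP_id)

lemma FM_id: "x \<notin> pm (set (concat M)) \<Longrightarrow> FM M x = (1, x)"
  by (induction M x rule: FM.induct) (auto simp: pm_union minusf_id)

lemma FM_in: "x \<in> pm (set (concat M)) \<Longrightarrow> snd (FM M x) \<in> pm (set (concat M))"
  by (induction M x rule: FM.induct) (auto simp: pm_union minusf_in FM_id)

lemma listprod_P:
  assumes "set (concat (map fst P)) \<subseteq> {1..int N}" "distinct (concat (map fst P))"
  shows "listprod N od (map (\<lambda>(as, c). plus_op N od as c) P) = basis_op N od (FP P)"
  using assms
proof (induction P)
  case Nil
  then show ?case by (simp add: listprod_def Imat_basis)
next
  case (Cons p P)
  obtain as c where p: "p = (as, c)" by fastforce
  let ?R = "set (concat (map fst P))"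
  have R: "?R \<subseteq> {1..int N}" using Cons.prems by auto
  have as: "set as \<subseteq> {1..int N}" using Cons.prems p by auto
  have dj: "pm (set as) \<inter> pm ?R = {}"
    using Cons.prems p R as by (intro pm_disj) auto
  have snd_in: "\<forall>x\<in>idx N od. snd (FP P x) \<in> idx N od"
    using FP_in FP_id pm_idx[OF R] by (metis snd_conv subsetD)
  have "listprod N od (map (\<lambda>(as, c). plus_op N od as c) (p # P))
      = mmul N od (basis_op N od (plusf as c)) (basis_op N od (FP P))"
    using Cons.IH Cons.prems p by (simp add: listprod_def plus_op_eq del: FP.simps)
  also have "\<dots> = basis_op N od (compf (plusf as c) (FP P))"
    by (rule basis_op_mul[OF snd_in])
  also have "\<dots> = basis_op N od (FP (p # P))"
  proof (intro basis_op_cong ballI)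
    fix x
    have "compf (plusf as c) (FP P) x = (if x \<in> pm (set as) then plusf as c x else FP P x)"
      by (rule compf_disj) (use dj in \<open>auto simp: plusf_id FP_id FP_in FP_in[simplified]\<close>)
    then show "compf (plusf as c) (FP P) x = FP (p # P) x" by (simp add: p)
  qed
  finally show ?case .
qed

lemma listprod_M:
  assumes "set (concat M) \<subseteq> {1..int N}" "distinct (concat M)"
  shows "listprod N od (map (minus_op N od) M) = basis_op N od (FM M)"
  using assms
proof (induction M)
  case Nil
  then show ?case by (simp add: listprod_def Imat_basis)
next
  case (Cons as M)
  let ?R = "set (concat M)"
  have R: "?R \<subseteq> {1..int N}" using Cons.prems by auto
  have as: "set as \<subseteq> {1..int N}" using Cons.prems by auto
  have dj: "pm (set as) \<inter> pm ?R = {}"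
    using Cons.prems R as by (intro pm_disj) auto
  have snd_in: "\<forall>x\<in>idx N od. snd (FM M x) \<in> idx N od"
    using FM_in FM_id pm_idx[OF R] by (metis snd_conv subsetD)
  have "listprod N od (map (minus_op N od) (as # M))
      = mmul N od (basis_op N od (minusf as)) (basis_op N od (FM M))"
  proof -
    have "listprod N od (map (minus_op N od) M) = basis_op N od (FM M)" using Cons.IH Cons.prems by simp
    then show ?thesis by (simp add: listprod_def minus_op_eq)
  qed
  also have "\<dots> = basis_op N od (compf (minusf as) (FM M))"
    by (rule basis_op_mul[OF snd_in])
  also have "\<dots> = basis_op N od (FM (as # M))"
  proof (intro basis_op_cong ballI)
    fix x
    have "compf (minusf as) (FM M) x = (if x \<in> pm (set as) then minusf as x else FM M x)"
      by (rule compf_disj) (use dj in \<open>auto simp: minusf_id FM_id FM_in FM_in[simplified]\<close>)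
    then show "compf (minusf as) (FM M) x = FM (as # M) x" by simp
  qed
  finally show ?case .
qed

definition GF :: "complex \<Rightarrow> (int list \<times> complex) list \<Rightarrow> int list list \<Rightarrow> int \<Rightarrow> complex \<times> int" where
  "GF e P M x = (if x = 0 then (e, 0) else FF P M x)"

lemma target_eq:
  assumes "set (concat (map fst P @ M)) \<subseteq> {1..int N}"
    "distinct (concat (map fst P @ M))"
  shows "mmul N od (eps_op N od e) (mmul N od (listprod N od (map (\<lambda>(as, c). plus_op N od as c) P))
                              (listprod N od (map (minus_op N od) M))) = basis_op N od (GF e P M)"
proof -
  let ?A = "set (concat (map fst P))" and ?B = "set (concat M)"
  have A: "?A \<subseteq> {1..int N}" and B: "?B \<subseteq> {1..int N}" using assms by auto
  have dj: "pm ?A \<inter> pm ?B = {}" using assms A B by (intro pm_disj) auto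
  have s1: "\<forall>x\<in>idx N od. snd (FM M x) \<in> idx N od"
    using FM_in FM_id pm_idx[OF B] by (metis snd_conv subsetD)
  have FFid: "x \<notin> pm (?A \<union> ?B) \<Longrightarrow> FF P M x = (1, x)" for x
    by (simp add: FF_def pm_union FM_id)
  have FFin: "x \<in> pm (?A \<union> ?B) \<Longrightarrow> snd (FF P M x) \<in> pm (?A \<union> ?B)" for x
    using dj by (auto simp: FF_def pm_union FM_id FM_in FP_in FM_in[simplified] FP_in[simplified])
  have AB: "pm (?A \<union> ?B) \<subseteq> idx N od" using A B by (intro pm_idx) auto
  have z: "0 \<notin> pm (?A \<union> ?B)" using A B unfolding pm_def by force
  have s2: "\<forall>x\<in>idx N od. snd (FF P M x) \<in> idx N od"
    using FFin FFid AB by (metis snd_conv subsetD)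
  have "mmul N od (listprod N od (map (\<lambda>(as, c). plus_op N od as c) P))
                              (listprod N od (map (minus_op N od) M)) = basis_op N od (compf (FP P) (FM M))"
    using assms by (simp add: listprod_P listprod_M basis_op_mul[OF s1])
  also have "\<dots> = basis_op N od (FF P M)"
  proof (intro basis_op_cong ballI)
    fix x
    have "compf (FP P) (FM M) x = (if x \<in> pm ?A then FP P x else FM M x)"
      by (rule compf_disj) (use dj in \<open>auto simp: FP_id FM_id FM_in FM_in[simplified]\<close>)
    then show "compf (FP P) (FM M) x = FF P M x" by (simp add: FF_def)
  qed
  finally have T: "mmul N od (listprod N od (map (\<lambda>(as, c). plus_op N od as c) P))
                              (listprod N od (map (minus_op N od) M)) = basis_op N od (FF P M)" .
  have "mmul N od (eps_op N od e) (basis_op N od (FF P M)) = basis_op N od (compf (\<lambda>v. if v = 0 then (e, 0) else (1, v)) (FF P M))"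
    unfolding eps_op_def by (rule basis_op_mul[OF s2])
  also have "\<dots> = basis_op N od (GF e P M)"
  proof (intro basis_op_cong ballI)
    fix x
    have "compf (\<lambda>v. if v = 0 then (e, 0) else (1, v)) (FF P M) x = (if x \<in> {0} then (e, 0) else FF P M x)"
      using compf_disj[of "{0}" "\<lambda>v. if v = 0 then (e, 0) else (1, v)" "pm (?A \<union> ?B)" "FF P M" x] z FFid FFin
      by auto
    then show "compf (\<lambda>v. if v = 0 then (e, 0) else (1, v)) (FF P M) x = GF e P M x" by (simp add: GF_def)
  qed
  finally show ?thesis using T by simp
qed




lemma croot: assumes "0 < n" "z \<noteq> 0" shows "\<exists>k::complex. k \<noteq> 0 \<and> k ^ n = z"
proof -
  define k where "k = rcis (root n (cmod z)) (Arg z / real n)"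
  have "k ^ n = rcis (root n (cmod z) ^ n) (real n * (Arg z / real n))"
    unfolding k_def by (rule DeMoivre2)
  also have "\<dots> = z" using assms by (simp add: rcis_cmod_Arg)
  finally have "k ^ n = z" .
  moreover have "k \<noteq> 0" using assms by (simp add: k_def real_root_gt_zero[THEN less_imp_neq, symmetric])
  ultimately show ?thesis by blast
qed

lemma funpow_neg: fixes \<sigma> :: "int \<Rightarrow> int" shows "(\<forall>x. \<sigma> (- x) = - \<sigma> x) \<Longrightarrow> (\<sigma> ^^ i) (- x) = - (\<sigma> ^^ i) x"
  by (induction i) simp_all

lemma funpow_in: "\<sigma> ` X \<subseteq> X \<Longrightarrow> a \<in> X \<Longrightarrow> (\<sigma> ^^ i) a \<in> X"
  by (induction i) auto

lemma orbit_return: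
  assumes "inj \<sigma>" "finite X" "\<sigma> ` X \<subseteq> X" "a \<in> X" shows "\<exists>k>0. (\<sigma> ^^ k) a = a"
proof -
  have "range (\<lambda>i. (\<sigma> ^^ i) a) \<subseteq> X" using funpow_in[OF assms(3,4)] by auto
  then have "finite (range (\<lambda>i. (\<sigma> ^^ i) a))" using assms(2) finite_subset by blast
  then have "\<not> inj (\<lambda>i. (\<sigma> ^^ i) a)" using finite_imageD infinite_UNIV_nat by blast
  then obtain i j where ij: "i \<noteq> j" "(\<sigma> ^^ i) a = (\<sigma> ^^ j) a" unfolding inj_def by blast
  define p where "p = min i j"
  define q where "q = max i j"
  have pq: "p < q" "(\<sigma> ^^ p) a = (\<sigma> ^^ q) a" using ij unfolding p_def q_def by (auto simp: min_def max_def)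
  have "(\<sigma> ^^ q) a = (\<sigma> ^^ p) ((\<sigma> ^^ (q - p)) a)"
    using pq by (metis funpow_add le_add_diff_inverse less_imp_le o_apply)
  then have "a = (\<sigma> ^^ (q - p)) a" using pq inj_fn[OF assms(1), of p] by (metis injD)
  then show ?thesis using pq by (intro exI[of _ "q - p"]) auto
qed

lemma succ_nth:
  assumes "distinct as" "i < length as"
  shows "succ_in as (as ! i) = as ! (Suc i mod length as)"
  using assms by (simp add: succ_in_def map_of_zip_nth nth_rotate1)

abbreviation "thp as \<equiv> complex_of_real (pi * (real (length as) - 1) / real (length as))"

lemma neg_notin: fixes as :: "int list" shows "set as \<subseteq> {0<..} \<Longrightarrow> y \<in> set as \<Longrightarrow> - y \<notin> set as"
proof
  assume "set as \<subseteq> {0<..}" "y \<in> set as" "- y \<in> set as"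
  then have "- y > 0" "y > 0" by auto
  then show False by simp
qed

lemma plusf_pos:
  assumes "distinct as" "set as \<subseteq> {0<..}" "i < length as"
  shows "plusf as c (as ! i) = (exp (- \<i> * thp as) * inverse c, as ! (Suc i mod length as))"
proof -
  have "as ! i \<in> set as" using assms by simp
  moreover have "- (as ! i) \<notin> set as" using assms \<open>as ! i \<in> set as\<close> neg_notin by blast
  ultimately show ?thesis using assms by (simp add: plusf_def Let_def succ_nth)
qed

lemma plusf_neg:
  assumes "distinct as" "set as \<subseteq> {0<..}" "i < length as"
  shows "plusf as c (- (as ! i)) = (exp (\<i> * thp as) * c, - (as ! (Suc i mod length as)))"
proof -
  have "as ! i \<in> set as" using assms by simp
  then show ?thesis using assms by (simp add: plusf_def Let_def succ_nth)
qed

lemma last_iff: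
  assumes "distinct as" "i < length as"
  shows "(as ! i = last as) = (Suc i = length as)"
proof -
  have ne: "as \<noteq> []" using assms by auto
  have "(as ! i = as ! (length as - 1)) = (i = length as - 1)"
    using assms by (intro nth_eq_iff_index_eq) auto
  then show ?thesis using ne assms by (auto simp: last_conv_nth)
qed

lemma minusf_pos:
  assumes "distinct as" "set as \<subseteq> {0<..}" "i < length as"
  shows "minusf as (as ! i) = (1, if Suc i = length as then - hd as else as ! Suc i)"
proof -
  have "as ! i \<in> set as" using assms by simp
  then show ?thesis using assms last_iff[OF assms(1,3)] by (simp add: minusf_def succ_nth)
qed

lemma minusf_neg:
  assumes "distinct as" "set as \<subseteq> {0<..}" "i < length as"
  shows "minusf as (- (as ! i)) = (1, if Suc i = length as then hd as else - (as ! Suc i))"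
proof -
  have "as ! i \<in> set as" using assms by simp
  moreover have "- (as ! i) \<notin> set as" using assms \<open>as ! i \<in> set as\<close> neg_notin by blast
  ultimately show ?thesis using assms last_iff[OF assms(1,3)] by (simp add: minusf_def succ_nth)
qed

lemma FF_cons_P: "FF ((as, c) # P) M y = (if y \<in> pm (set as) then plusf as c y else FF P M y)"
  by (auto simp: FF_def pm_union)

lemma FF_cons_M: "pm (set as) \<inter> pm (set (concat (map fst P))) = {} \<Longrightarrow>
   FF P (as # M) y = (if y \<in> pm (set as) then minusf as y else FF P M y)"
  by (auto simp: FF_def)




lemma pm_neg: "(- x \<in> pm A) = (x \<in> pm A)"
  unfolding pm_def by (auto simp: image_iff) (metis minus_minus)

lemma abs_cases_int: "\<bar>x::int\<bar> = \<bar>y\<bar> \<Longrightarrow> x = y \<or> x = - y"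
  by arith

lemma exp_pair1: "exp (- \<i> * t) * inverse (inverse (k * exp (\<i> * t))) = k"
proof -
  have "exp (- \<i> * t) * exp (\<i> * t) = 1" by (simp add: exp_minus field_simps)
  then show ?thesis by (simp add: field_simps)
qed

lemma exp_pair2: "exp (\<i> * t) * inverse (k * exp (\<i> * t)) = inverse k"
  by (simp add: field_simps)

lemma CL:
  fixes \<sigma> :: "int \<Rightarrow> int" and \<mu> :: "int \<Rightarrow> complex"
  assumes inj: "inj \<sigma>" and neg: "\<forall>x. \<sigma> (- x) = - \<sigma> x"
    and "finite S" "S \<subseteq> {0<..}" "\<sigma> ` pm S \<subseteq> pm S" "\<forall>x\<in>pm S. \<mu> x * \<mu> (- x) = 1"
  shows "\<exists>P M sg \<nu>. (\<forall>(as, c) \<in> set P. as \<noteq> [] \<and> c \<noteq> 0) \<and> (\<forall>as \<in> set M. as \<noteq> []) \<and>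
     distinct (concat (map fst P @ M)) \<and> set (concat (map fst P @ M)) = S \<and>
     (\<forall>x. sg x \<in> {1,-1}) \<and> (\<forall>x. sg (- x) = sg x) \<and> (\<forall>x. \<nu> x \<noteq> 0) \<and> (\<forall>x. \<nu> (- x) * \<nu> x = 1) \<and>
     (\<forall>x\<in>pm S. \<mu> x * \<nu> (\<sigma> x) = \<nu> x * fst (FF P M (sg x * x)) \<and> sg (\<sigma> x) * \<sigma> x = snd (FF P M (sg x * x)))"
  using assms(3-6)
proof (induction "card S" arbitrary: S rule: less_induct)
  case less
  have fin: "finite S" and pos: "S \<subseteq> {0<..}" and cl: "\<sigma> ` pm S \<subseteq> pm S"
    and mu: "\<forall>x\<in>pm S. \<mu> x * \<mu> (- x) = 1" using less.prems by auto
  show ?case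
  proof (cases "S = {}")
    case True
    show ?thesis using True
      by (intro exI[of _ "[]"] exI[of _ "[]"] exI[of _ "\<lambda>_. 1"] exI[of _ "\<lambda>_. 1"]) (simp add: pm_def)
  next
    case False
    then obtain a where aS: "a \<in> S" by blast
    have a0: "a > 0" using aS pos by auto
    have finpm: "finite (pm S)" using fin by (simp add: pm_def)
    have z0: "0 \<notin> pm S" using pos by (auto simp: pm_def)
    have apm: "a \<in> pm S" using aS by (simp add: pm_def)
    define s where "s i = (\<sigma> ^^ i) a" for i
    have s_in: "s i \<in> pm S" for i unfolding s_def by (rule funpow_in[OF cl apm])
    have s_nz: "s i \<noteq> 0" for i using s_in z0 by metis
    have s0: "s 0 = a" by (simp add: s_def)
    have s_Suc: "s (Suc i) = \<sigma> (s i)" for i by (simp add: s_def)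
    have s_add: "s (i + j) = (\<sigma> ^^ i) (s j)" for i j by (simp add: s_def funpow_add)
    have sneg: "(\<sigma> ^^ i) (- x) = - (\<sigma> ^^ i) x" for i x using funpow_neg[OF neg] .
    have ex: "\<exists>k>0. s k = a \<or> s k = - a"
      using orbit_return[OF inj finpm cl apm] s_def by auto
    define l where "l = (LEAST k. k > 0 \<and> (s k = a \<or> s k = - a))"
    have l: "l > 0" "s l = a \<or> s l = - a" using LeastI_ex[OF ex] unfolding l_def by auto
    have lmin: "s k \<noteq> a \<and> s k \<noteq> - a" if "0 < k" "k < l" for k
      using not_less_Least[of k "\<lambda>k. k > 0 \<and> (s k = a \<or> s k = - a)"] that unfolding l_def by auto
    have dist: "s i \<noteq> s j \<and> s i \<noteq> - s j" if ij: "i < j" "j < l" for i j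
    proof -
      have sj: "s j = (\<sigma> ^^ i) (s (j - i))" using s_add[of i "j - i"] ij by simp
      have si: "s i = (\<sigma> ^^ i) a" by (simp add: s_def)
      have inj_i: "inj (\<sigma> ^^ i)" using inj by simp
      have m: "s (j - i) \<noteq> a \<and> s (j - i) \<noteq> - a" using lmin[of "j - i"] ij by auto
      show ?thesis
      proof
        show "s i \<noteq> s j"
        proof
          assume "s i = s j"
          then have "a = s (j - i)" using sj si inj_i by (metis injD)
          then show False using m by simp
        qed
        show "s i \<noteq> - s j"
        proof
          assume "s i = - s j"
          then have "(\<sigma> ^^ i) a = (\<sigma> ^^ i) (- s (j - i))" using sj si sneg by metis
          then have "a = - s (j - i)" using inj_i by (metis injD)
          then show False using m by simp
        qed
      qed
    qed
    have dist2: "i = j" if "i < l" "j < l" "s i = s j" for i j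
      using dist[of i j] dist[of j i] that by (metis linorder_neqE_nat)
    have dist3: "s i \<noteq> - s j" if "i < l" "j < l" for i j
    proof (cases "i = j")
      case True then show ?thesis using s_nz[of i] by simp
    next
      case False then show ?thesis using dist[of i j] dist[of j i] that
        by (metis linorder_neqE_nat minus_minus)
    qed
    define W where "W = s ` {..<l}"
    define as where "as = map (\<lambda>i. \<bar>s i\<bar>) [0..<l]"
    have len: "length as = l" by (simp add: as_def)
    have nth: "as ! i = \<bar>s i\<bar>" if "i < l" for i using that by (simp add: as_def)
    have setas: "set as = (\<lambda>i. \<bar>s i\<bar>) ` {..<l}" by (auto simp: as_def)
    have WnW: "- x \<notin> W" if "x \<in> W" for x
      using that dist3 unfolding W_def by (auto simp: image_iff) (metis minus_minus)
    have as_dist: "distinct as"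
    proof -
      have "as ! i \<noteq> as ! j" if "i < l" "j < l" "i \<noteq> j" for i j
        using that nth abs_cases_int dist2 dist3 by metis
      then show ?thesis by (simp add: distinct_conv_nth len)
    qed
    have as_pos: "set as \<subseteq> {0<..}" using s_nz by (auto simp: setas)
    have abs_S: "\<bar>x\<bar> \<in> S" if "x \<in> pm S" for x
      using that pos unfolding pm_def by auto
    have C_S: "set as \<subseteq> S" using abs_S s_in by (auto simp: setas)
    have pmC: "pm (set as) = W \<union> uminus ` W"
    proof
      show "pm (set as) \<subseteq> W \<union> uminus ` W"
      proof
        fix y assume "y \<in> pm (set as)"
        then obtain i where i: "i < l" "y = \<bar>s i\<bar> \<or> y = - \<bar>s i\<bar>" unfolding pm_def setas by auto
        have "s i \<in> W" using i by (simp add: W_def)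
        then show "y \<in> W \<union> uminus ` W" using i by (cases "s i \<ge> 0") (auto simp: image_iff)
      qed
      show "W \<union> uminus ` W \<subseteq> pm (set as)"
      proof
        fix y assume "y \<in> W \<union> uminus ` W"
        then obtain i where i: "i < l" "y = s i \<or> y = - s i" unfolding W_def by auto
        have "\<bar>s i\<bar> \<in> set as" using i by (auto simp: setas)
        moreover have "y = \<bar>s i\<bar> \<or> y = - \<bar>s i\<bar>" using i by arith
        ultimately show "y \<in> pm (set as)" unfolding pm_def by (auto intro: rev_image_eqI)
      qed
    qed
    have hd: "hd as = a" using l a0 s0 by (simp add: as_def hd_map upt_rec)
    have aW: "a \<in> W" using l s0 unfolding W_def by force
    have sW: "s (Suc i) \<in> W \<union> uminus ` W" if "i < l" for i
    proof (cases "Suc i < l")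
      case True then show ?thesis by (simp add: W_def)
    next
      case False
      then have "Suc i = l" using that by simp
      then show ?thesis using l aW by auto
    qed
    have clC: "\<sigma> ` pm (set as) \<subseteq> pm (set as)"
    proof
      fix y assume "y \<in> \<sigma> ` pm (set as)"
      then obtain i where i: "i < l" "y = \<sigma> (s i) \<or> y = \<sigma> (- s i)" unfolding pmC W_def by auto
      then have "y = s (Suc i) \<or> y = - s (Suc i)" using neg s_Suc by auto
      then show "y \<in> pm (set as)" using sW[OF i(1)] unfolding pmC by (auto simp: image_iff)
    qed
    define S' where "S' = S - set as"
    have pmS': "pm S' = pm S - pm (set as)"
      using pos as_pos unfolding S'_def pm_def subset_iff greaterThan_iff
      by auto (metis neg_0_less_iff_less less_asym)+
    have finC: "finite (pm (set as))" by (simp add: pm_def)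
    have imC: "\<sigma> ` pm (set as) = pm (set as)"
      using endo_inj_surj[OF finC clC] inj by (simp add: inj_on_def inj_def)
    have clS': "\<sigma> ` pm S' \<subseteq> pm S'"
    proof
      fix y assume "y \<in> \<sigma> ` pm S'"
      then obtain x where x: "x \<in> pm S'" "y = \<sigma> x" by blast
      have "y \<in> pm S" using x cl pmS' by auto
      moreover have "y \<notin> pm (set as)"
      proof
        assume "y \<in> pm (set as)"
        then obtain x' where "x' \<in> pm (set as)" "\<sigma> x' = y" using imC by (metis imageE)
        then have "x \<in> pm (set as)" using x inj by (metis injD)
        then show False using x pmS' by auto
      qed
      ultimately show "y \<in> pm S'" using pmS' by auto
    qed
    have aC: "a \<in> set as" unfolding setas using l a0 s0 by (intro image_eqI[of a _ 0]) auto
    have card: "card S' < card S" unfolding S'_def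
      using aC aS fin by (intro psubset_card_mono) auto
    have finS': "finite S'" and posS': "S' \<subseteq> {0<..}" using fin pos by (auto simp: S'_def)
    have muS': "\<forall>x\<in>pm S'. \<mu> x * \<mu> (- x) = 1" using mu pmS' by auto
    obtain P' M' sg' \<nu>' where IH1: "(\<forall>(as, c) \<in> set P'. as \<noteq> [] \<and> c \<noteq> 0)" "(\<forall>as \<in> set M'. as \<noteq> [])"
      "distinct (concat (map fst P' @ M'))" "set (concat (map fst P' @ M')) = S'"
      and sg1': "\<forall>x. sg' x \<in> {1,-1}" and sg2': "\<forall>x. sg' (- x) = sg' x"
      and nu1': "\<forall>x. \<nu>' x \<noteq> 0" and nu2': "\<forall>x. \<nu>' (- x) * \<nu>' x = 1"
      and eq': "\<forall>x\<in>pm S'. \<mu> x * \<nu>' (\<sigma> x) = \<nu>' x * fst (FF P' M' (sg' x * x)) \<and>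
                         sg' (\<sigma> x) * \<sigma> x = snd (FF P' M' (sg' x * x))"
      using less.hyps[OF card finS' posS' clS' muS'] by blast
    define \<Pi> where "\<Pi> i = (\<Prod>j<i. \<mu> (s j))" for i
    have mu_neg: "\<mu> (- s j) = inverse (\<mu> (s j))" and mu_nz: "\<mu> (s j) \<noteq> 0" for j
    proof -
      have "\<mu> (s j) * \<mu> (- s j) = 1" using mu s_in by blast
      then show "\<mu> (- s j) = inverse (\<mu> (s j))" "\<mu> (s j) \<noteq> 0"
        by (simp_all add: inverse_unique) (metis mult_zero_left zero_neq_one)
    qed
    have Pi_nz: "\<Pi> i \<noteq> 0" for i using mu_nz by (simp add: \<Pi>_def)
    have Pi_Suc: "\<Pi> (Suc i) = \<Pi> i * \<mu> (s i)" for i by (simp add: \<Pi>_def)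
    define \<epsilon> :: int where "\<epsilon> = (if s l = a then 1 else -1)"
    have sl: "s l = \<epsilon> * a" using l by (auto simp: \<epsilon>_def)
    obtain z k :: complex where zk: "z \<noteq> 0" "k \<noteq> 0"
      "if \<epsilon> = 1 then z = 1 \<and> k ^ l = \<Pi> l else k = 1 \<and> z ^ 2 = \<Pi> l"
    proof (cases "\<epsilon> = 1")
      case True
      obtain k where "k \<noteq> 0" "k ^ l = \<Pi> l" using croot[OF l(1) Pi_nz] by blast
      then show ?thesis using that[of 1 k] True by simp
    next
      case False
      obtain z where "z \<noteq> 0" "z ^ 2 = \<Pi> l" using croot[of 2, OF _ Pi_nz] by auto
      then show ?thesis using that[of z 1] False by simp
    qed
    define w where "w i = z * k ^ i / \<Pi> i" for i
    have w_nz: "w i \<noteq> 0" for i using zk Pi_nz by (simp add: w_def)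
    define ind where "ind x = (THE i. i < l \<and> s i = x)" for x
    have ind: "ind (s i) = i" if "i < l" for i
      unfolding ind_def using that dist2 by (intro the_equality) auto
    define sg where "sg x = (if x \<in> W then sgn x else if - x \<in> W then - sgn x else sg' x)" for x
    define \<nu> where "\<nu> x = (if x \<in> W then w (ind x) else if - x \<in> W then inverse (w (ind (- x))) else \<nu>' x)" for x
    define cc where "cc = inverse (k * exp (\<i> * thp as))"
    define P where "P = (if \<epsilon> = 1 then (as, cc) # P' else P')"
    define M where "M = (if \<epsilon> = 1 then M' else as # M')"
    define cf where "cf = (if \<epsilon> = 1 then plusf as cc else minusf as)"
    have setP': "set (concat (map fst P')) \<subseteq> S'" using IH1(4) by auto
    have djP: "pm (set as) \<inter> pm (set (concat (map fst P'))) = {}"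
      using setP' posS' as_pos by (intro pm_disj) (auto simp: S'_def)
    have FFeq: "FF P M y = (if y \<in> pm (set as) then cf y else FF P' M' y)" for y
      unfolding P_def M_def cf_def using FF_cons_P FF_cons_M[OF djP] by auto
    have ne: "as \<noteq> []" using l len by auto
    have hdn: "hd as = as ! 0" using ne by (rule hd_conv_nth)
    have cf_pos: "cf (as ! i) = (k, if Suc i = l then \<epsilon> * hd as else as ! Suc i)" if i: "i < l" for i
    proof (cases "\<epsilon> = 1")
      case True
      have "exp (- \<i> * thp as) * inverse cc = k"
        unfolding cc_def by (rule exp_pair1)
      moreover have "as ! (Suc i mod l) = (if Suc i = l then \<epsilon> * hd as else as ! Suc i)"
        using i True hdn by auto
      ultimately show ?thesis using True plusf_pos[OF as_dist as_pos, of i cc] i len by (simp add: cf_def)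
    next
      case False
      then have em: "\<epsilon> = -1" by (simp add: \<epsilon>_def split: if_splits)
      then show ?thesis using False minusf_pos[OF as_dist as_pos, of i] i len zk by (simp add: cf_def)
    qed
    have cf_neg: "cf (- (as ! i)) = (inverse k, if Suc i = l then - (\<epsilon> * hd as) else - (as ! Suc i))" if i: "i < l" for i
    proof (cases "\<epsilon> = 1")
      case True
      have "exp (\<i> * thp as) * cc = inverse k"
        unfolding cc_def by (rule exp_pair2)
      moreover have "as ! (Suc i mod l) = (if Suc i = l then \<epsilon> * hd as else as ! Suc i)"
        using i True hdn by auto
      ultimately show ?thesis using True plusf_neg[OF as_dist as_pos, of i cc] i len by (simp add: cf_def)
    next
      case False
      then have em: "\<epsilon> = -1" by (simp add: \<epsilon>_def split: if_splits)
      then show ?thesis using False minusf_neg[OF as_dist as_pos, of i] i len zk by (simp add: cf_def)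
    qed
    have sgn_abs: "sgn x * x = \<bar>x\<bar>" for x :: int by (simp add: abs_sgn mult.commute)
    have sW_i: "s i \<in> W" if "i < l" for i using that by (simp add: W_def)
    have E_W: "\<mu> (s i) * \<nu> (s (Suc i)) = \<nu> (s i) * k \<and>
               sg (s (Suc i)) * s (Suc i) = (if Suc i = l then \<epsilon> * hd as else as ! Suc i)"
      if i: "i < l" for i
    proof (cases "Suc i < l")
      case True
      have num: "\<mu> (s i) * w (Suc i) = w i * k"
        using Pi_nz[of i] mu_nz[of i] unfolding w_def Pi_Suc by (simp add: field_simps)
      have nu1: "\<nu> (s i) = w i" using sW_i[OF i] ind[OF i] by (simp add: \<nu>_def)
      have nu2: "\<nu> (s (Suc i)) = w (Suc i)" using sW_i[OF True] ind[OF True] by (simp add: \<nu>_def)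
      have sg2: "sg (s (Suc i)) * s (Suc i) = as ! Suc i"
        using sW_i[OF True] nth[OF True] by (simp add: sg_def sgn_abs)
      show ?thesis using True num nu1 nu2 sg2 by simp
    next
      case False
      then have Si: "Suc i = l" using i by simp
      show ?thesis
      proof (cases "\<epsilon> = 1")
        case True
        then have sla: "s (Suc i) = a" using sl Si by simp
        have z1: "z = 1" and kl0: "k ^ l = \<Pi> l" using zk True by auto
        have kl: "k ^ Suc i = \<Pi> i * \<mu> (s i)" using kl0 Si Pi_Suc[of i] by simp
        have w0: "w 0 = 1" using z1 by (simp add: w_def \<Pi>_def)
        have "w i * k = k ^ Suc i / \<Pi> i" using z1 by (simp add: w_def)
        then have num: "\<mu> (s i) * w 0 = w i * k" using kl Pi_nz[of i] w0 by simp
        have a_ind: "ind a = 0" using ind[of 0] l s0 by simp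
        have sga: "sg a = 1" using aW a0 by (simp add: sg_def)
        have nua: "\<nu> a = w 0" using aW a_ind by (simp add: \<nu>_def)
        have hda: "\<epsilon> * hd as = a" using True hd by simp
        have nui: "\<nu> (s i) = w i" using sW_i[OF i] ind[OF i] by (simp add: \<nu>_def)
        show ?thesis using num sla Si sga nua hda nui a0 by simp
      next
        case False
        then have em: "\<epsilon> = -1" by (simp add: \<epsilon>_def split: if_splits)
        then have sla: "s (Suc i) = - a" using sl Si by simp
        have nA: "- a \<notin> W" using WnW aW by blast
        have k1: "k = 1" and z2: "z ^ 2 = \<Pi> l" using zk False by auto
        have z2': "z * z = \<Pi> i * \<mu> (s i)" using z2 Si Pi_Suc[of i] by (simp add: power2_eq_square)
        have w0: "w 0 = z" using k1 by (simp add: w_def \<Pi>_def)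
        have wi: "w i = z / \<Pi> i" using k1 by (simp add: w_def)
        have "z * w i = (z * z) / \<Pi> i" using wi by simp
        also have "\<dots> = \<mu> (s i)" using z2' Pi_nz[of i] by simp
        finally have m: "\<mu> (s i) = z * w i" by simp
        have num: "\<mu> (s i) * inverse (w 0) = w i * k"
          using w0 k1 zk(1) m by simp
        have a_ind: "ind a = 0" using ind[of 0] l s0 by simp
        have sga: "sg (- a) = 1" using aW nA a0 by (simp add: sg_def)
        have nua: "\<nu> (- a) = inverse (w 0)" using aW nA a_ind by (simp add: \<nu>_def)
        have hda: "\<epsilon> * hd as = - a" using em hd by simp
        have nui: "\<nu> (s i) = w i" using sW_i[OF i] ind[OF i] by (simp add: \<nu>_def)
        show ?thesis using num sla Si sga nua hda nui a0 by simp
      qed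
    qed
    have nu'_neg: "\<nu>' (- x) = inverse (\<nu>' x)" for x using nu2' by (metis inverse_unique mult.commute)
    have nu_neg: "\<nu> (- x) = inverse (\<nu> x)" for x
      unfolding \<nu>_def using WnW nu'_neg by auto
    have sg_neg: "sg (- x) = sg x" for x
      unfolding sg_def using WnW sg2' by auto
    have nu_nz: "\<nu> x \<noteq> 0" for x
      unfolding \<nu>_def using w_nz nu1' by auto
    have sg_pm: "sg x \<in> {1, -1}" for x
    proof -
      have "x \<in> W \<Longrightarrow> x \<noteq> 0" using s_nz unfolding W_def by auto
      moreover have "- x \<in> W \<Longrightarrow> x \<noteq> 0" using s_nz unfolding W_def by auto
      ultimately show ?thesis unfolding sg_def using sg1' by (auto simp: sgn_if)
    qed
    have eqn: "\<mu> x * \<nu> (\<sigma> x) = \<nu> x * fst (FF P M (sg x * x)) \<and> sg (\<sigma> x) * \<sigma> x = snd (FF P M (sg x * x))"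
      if x: "x \<in> pm S" for x
    proof -
      consider (W) "x \<in> W" | (nW) "- x \<in> W" | (R) "x \<notin> W" "- x \<notin> W" by blast
      then show ?thesis
      proof cases
        case W
        then obtain i where i: "i < l" "x = s i" unfolding W_def by auto
        have "sg x * x = as ! i" using i sW_i nth by (simp add: sg_def sgn_abs)
        moreover have "as ! i \<in> pm (set as)" using i len by (simp add: pm_def)
        ultimately show ?thesis using E_W[OF i(1)] i cf_pos[OF i(1)] FFeq s_Suc by simp
      next
        case nW
        then obtain i where i: "i < l" "x = - s i" unfolding W_def by (auto simp: image_iff)
        have sx: "sg x * x = - (as ! i)" using i sW_i nth WnW by (simp add: sg_def sgn_abs)
        have inC: "- (as ! i) \<in> pm (set as)" using i len by (simp add: pm_def)
        have sx2: "\<sigma> x = - s (Suc i)" using i neg s_Suc by simp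
        have "\<mu> x * \<nu> (\<sigma> x) = inverse (\<mu> (s i) * \<nu> (s (Suc i)))"
          using sx2 i mu_neg nu_neg by simp
        also have "\<dots> = \<nu> x * inverse k" using E_W[OF i(1)] i nu_neg by simp
        finally have e1: "\<mu> x * \<nu> (\<sigma> x) = \<nu> x * inverse k" .
        have e2: "sg (\<sigma> x) * \<sigma> x = - (sg (s (Suc i)) * s (Suc i))" using sx2 sg_neg by simp
        show ?thesis using e1 e2 E_W[OF i(1)] sx inC cf_neg[OF i(1)] FFeq by auto
      next
        case R
        have xS': "x \<in> pm S'" using x R pmS' pmC by auto
        have sxS': "\<sigma> x \<in> pm S'" using xS' clS' by auto
        have sxR: "\<sigma> x \<notin> W" "- \<sigma> x \<notin> W" using sxS' pmS' pmC by auto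
        have "sg' x = 1 \<or> sg' x = -1" using sg1' by auto
        then have "sg' x * x \<in> pm S'" using xS' pm_neg by auto
        then have nC: "sg' x * x \<notin> pm (set as)" using pmS' by auto
        show ?thesis using eq' xS' R sxR nC FFeq by (simp add: sg_def \<nu>_def)
      qed
    qed
    show ?thesis
    proof (intro exI[of _ P] exI[of _ M] exI[of _ sg] exI[of _ \<nu>] conjI)
      show "\<forall>(as, c)\<in>set P. as \<noteq> [] \<and> c \<noteq> 0"
        using IH1(1) l len zk by (auto simp: P_def cc_def)
      show "\<forall>as\<in>set M. as \<noteq> []" using IH1(2) l len by (auto simp: M_def)
      show "distinct (concat (map fst P @ M))"
        using IH1(3,4) as_dist unfolding P_def M_def S'_def by auto
      show "set (concat (map fst P @ M)) = S"
        using IH1(4) C_S unfolding P_def M_def S'_def by auto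
      show "\<forall>x. sg x \<in> {1, -1}" using sg_pm by blast
      show "\<forall>x. sg (- x) = sg x" using sg_neg by blast
      show "\<forall>x. \<nu> x \<noteq> 0" using nu_nz by blast
      show "\<forall>x. \<nu> (- x) * \<nu> x = 1" using nu_neg nu_nz by simp
      show "\<forall>x\<in>pm S. \<mu> x * \<nu> (\<sigma> x) = \<nu> x * fst (FF P M (sg x * x)) \<and> sg (\<sigma> x) * \<sigma> x = snd (FF P M (sg x * x))"
        using eqn by blast
    qed
  qed
qed




lemma idx_pm: "idx N od - {0} = pm {1..int N}"
proof
  show "idx N od - {0} \<subseteq> pm {1..int N}"
  proof
    fix x assume x: "x \<in> idx N od - {0}"
    show "x \<in> pm {1..int N}"
    proof (cases "x > 0")
      case True then show ?thesis using x unfolding idx_def pm_def by auto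
    next
      case False
      then have "-x \<in> {1..int N}" using x unfolding idx_def by auto
      then show ?thesis unfolding pm_def by (metis UnI2 minus_minus rev_image_eqI)
    qed
  qed
  show "pm {1..int N} \<subseteq> idx N od - {0}" unfolding idx_def pm_def by auto
qed

lemma main_gen:
  assumes g: "g \<in> NormO N od"
  shows "\<exists>(e::complex) (P :: (int list \<times> complex) list) (M :: int list list).
              e \<in> {1, -1} \<and>
              (\<forall>(as, c) \<in> set P. as \<noteq> [] \<and> c \<noteq> 0) \<and> (\<forall>as \<in> set M. as \<noteq> []) \<and>
              distinct (concat (map fst P @ M)) \<and> set (concat (map fst P @ M)) = {1 .. int N} \<and>
              conj_in_Norm N od g
                (mmul N od (eps_op N od e)
                   (mmul N od (listprod N od (map (\<lambda>(as, c). plus_op N od as c) P))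
                                (listprod N od (map (minus_op N od) M))))"
proof -
  let ?I = "idx N od" and ?S = "{1..int N}"
  obtain \<sigma> \<mu> where s_inj: "inj \<sigma>" and s_neg: "\<forall>x. \<sigma> (- x) = - \<sigma> x" and sI: "\<forall>c\<in>?I. \<sigma> c \<in> ?I"
    and "\<forall>c. c \<notin> ?I \<longrightarrow> \<sigma> c = c"
    and geq: "g = basis_op N od (\<lambda>c. (\<mu> c, \<sigma> c))" and mu: "\<forall>c\<in>?I. \<mu> c * \<mu> (- c) = 1"
    by (rule NormO_monomial[OF g])
  have s0: "\<sigma> 0 = 0" using s_neg[rule_format, of 0] by simp
  have pmI: "pm ?S = ?I - {0}" by (simp add: idx_pm)
  have sS: "\<sigma> ` pm ?S \<subseteq> pm ?S"
  proof
    fix y assume "y \<in> \<sigma> ` pm ?S"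
    then obtain x where x: "x \<in> ?I" "x \<noteq> 0" "y = \<sigma> x" using pmI by auto
    then have "\<sigma> x \<noteq> 0" using s0 s_inj by (metis injD)
    then show "y \<in> pm ?S" using x sI pmI by auto
  qed
  have fin: "finite ?S" by simp
  have pos: "?S \<subseteq> {0<..}" by auto
  have muS: "\<forall>x\<in>pm ?S. \<mu> x * \<mu> (- x) = 1" using mu pmI by auto
  obtain P M sg \<nu> where PM: "(\<forall>(as, c) \<in> set P. as \<noteq> [] \<and> c \<noteq> 0)" "(\<forall>as \<in> set M. as \<noteq> [])"
     "distinct (concat (map fst P @ M))" "set (concat (map fst P @ M)) = ?S"
     and sg1: "\<forall>x. sg x \<in> {1,-1}" and sg2: "\<forall>x. sg (- x) = sg x" and nu1: "\<forall>x. \<nu> x \<noteq> 0"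
     and nu2: "\<forall>x. \<nu> (- x) * \<nu> x = 1"
     and eq: "\<forall>x\<in>pm ?S. \<mu> x * \<nu> (\<sigma> x) = \<nu> x * fst (FF P M (sg x * x)) \<and> sg (\<sigma> x) * \<sigma> x = snd (FF P M (sg x * x))"
    using CL[OF s_inj s_neg fin pos sS muS] by blast
  define e where "e = (if od then \<mu> 0 else 1)"
  have e: "e \<in> {1, -1}"
  proof (cases od)
    case True
    then have "0 \<in> ?I" by (simp add: idx_def)
    then have "\<mu> 0 * \<mu> 0 = 1" using mu by force
    then have "\<mu> 0 ^ 2 = 1" by (simp add: power2_eq_square)
    then have "\<mu> 0 = 1 \<or> \<mu> 0 = -1" by (simp add: power2_eq_1_iff)
    then show ?thesis using True by (auto simp: e_def)
  qed (simp add: e_def)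
  define h where "h = basis_op N od (\<lambda>c. (\<nu> c, sg c * c))"
  define h' where "h' = basis_op N od (\<lambda>c. (1 / \<nu> (sg c * c), sg c * c))"
  have hN: "h \<in> NormO N od" and hinv: "is_inv N od h h'"
    using conj_mono[OF sg1 sg2 nu1 nu2] unfolding h_def h'_def by auto
  have tI: "\<forall>c\<in>?I. snd ((\<lambda>c. (\<nu> c, sg c * c)) c) \<in> ?I"
  proof
    fix c assume c: "c \<in> ?I"
    have "sg c = 1 \<or> sg c = -1" using sg1 by auto
    then show "snd ((\<lambda>c. (\<nu> c, sg c * c)) c) \<in> ?I" using c by auto
  qed
  define T where "T = basis_op N od (GF e P M)"
  have Teq: "mmul N od (eps_op N od e) (mmul N od (listprod N od (map (\<lambda>(as, c). plus_op N od as c) P))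
                                (listprod N od (map (minus_op N od) M))) = T"
    unfolding T_def using PM by (intro target_eq) auto
  have "mmul N od h g = mmul N od T h"
    unfolding geq h_def T_def
  proof (subst basis_op_mul, use sI in simp, subst basis_op_mul[OF tI], intro basis_op_cong ballI)
    fix c assume c: "c \<in> ?I"
    show "compf (\<lambda>c. (\<nu> c, sg c * c)) (\<lambda>c. (\<mu> c, \<sigma> c)) c = compf (GF e P M) (\<lambda>c. (\<nu> c, sg c * c)) c"
    proof (cases "c = 0")
      case True
      then have "od" using c by (simp add: idx_def split: if_splits)
      then show ?thesis using True s0 by (simp add: compf_def GF_def e_def)
    next
      case False
      then have cS: "c \<in> pm ?S" using c pmI by auto
      have "sg c = 1 \<or> sg c = -1" using sg1 by auto
      then have "sg c * c \<noteq> 0" using False by auto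
      then show ?thesis using eq cS by (simp add: compf_def GF_def mult.commute)
    qed
  qed
  then have "mmul N od (mmul N od h g) h' = mmul N od T (mmul N od h h')" by (simp add: mmul_assoc)
  also have "\<dots> = T" using hinv by (simp add: is_inv_def T_def mmul_I_right)
  finally have "conj_in_Norm N od g T" unfolding conj_in_Norm_def using hN hinv by blast
  then show ?thesis using PM e Teq by blast
qed

theorem mainTheorem1:
  shows "(\<forall>(N::nat) g. g \<in> NormO N False \<longrightarrow>
           (\<exists>(P :: (int list \<times> complex) list) (M :: int list list).
              (\<forall>(as, c) \<in> set P. as \<noteq> [] \<and> c \<noteq> 0) \<and> (\<forall>as \<in> set M. as \<noteq> []) \<and>
              distinct (concat (map fst P @ M)) \<and> set (concat (map fst P @ M)) = {1 .. int N} \<and>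
              conj_in_Norm N False g
                (mmul N False (listprod N False (map (\<lambda>(as, c). plus_op N False as c) P))
                              (listprod N False (map (minus_op N False) M)))))
       \<and> (\<forall>(N::nat) g. g \<in> NormO N True \<longrightarrow>
           (\<exists>(e::complex) (P :: (int list \<times> complex) list) (M :: int list list).
              e \<in> {1, -1} \<and>
              (\<forall>(as, c) \<in> set P. as \<noteq> [] \<and> c \<noteq> 0) \<and> (\<forall>as \<in> set M. as \<noteq> []) \<and>
              distinct (concat (map fst P @ M)) \<and> set (concat (map fst P @ M)) = {1 .. int N} \<and>
              conj_in_Norm N True g
                (mmul N True (eps_op N True e)
                   (mmul N True (listprod N True (map (\<lambda>(as, c). plus_op N True as c) P))
                                (listprod N True (map (minus_op N True) M))))))"
proof (intro conjI allI impI)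
  fix N g assume g: "g \<in> NormO N True"
  show "\<exists>(e::complex) (P :: (int list \<times> complex) list) (M :: int list list).
              e \<in> {1, -1} \<and>
              (\<forall>(as, c) \<in> set P. as \<noteq> [] \<and> c \<noteq> 0) \<and> (\<forall>as \<in> set M. as \<noteq> []) \<and>
              distinct (concat (map fst P @ M)) \<and> set (concat (map fst P @ M)) = {1 .. int N} \<and>
              conj_in_Norm N True g
                (mmul N True (eps_op N True e)
                   (mmul N True (listprod N True (map (\<lambda>(as, c). plus_op N True as c) P))
                                (listprod N True (map (minus_op N True) M))))"
    by (rule main_gen[OF g])
next
  fix N g assume g: "g \<in> NormO N False"
  obtain e P M where PM: "(\<forall>(as, c) \<in> set P. as \<noteq> [] \<and> c \<noteq> 0)" "(\<forall>as \<in> set M. as \<noteq> [])"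
     "distinct (concat (map fst P @ M))" "set (concat (map fst P @ M)) = {1 .. int N}"
     and cj: "conj_in_Norm N False g
                (mmul N False (eps_op N False e)
                   (mmul N False (listprod N False (map (\<lambda>(as, c). plus_op N False as c) P))
                                (listprod N False (map (minus_op N False) M))))"
    using main_gen[OF g] by blast
  have epsI: "eps_op N False e = Imat N False"
    unfolding eps_op_def Imat_basis by (rule basis_op_cong) (auto simp: idx_def)
  have "listprod N False (map (\<lambda>(as, c). plus_op N False as c) P) \<in> Mat N False"
    using PM by (subst listprod_P) auto
  moreover have "listprod N False (map (minus_op N False) M) \<in> Mat N False"
    using PM by (subst listprod_M) auto
  ultimately have "mmul N False (eps_op N False e)
                   (mmul N False (listprod N False (map (\<lambda>(as, c). plus_op N False as c) P))
                                (listprod N False (map (minus_op N False) M)))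
     = mmul N False (listprod N False (map (\<lambda>(as, c). plus_op N False as c) P))
                              (listprod N False (map (minus_op N False) M))"
    by (simp add: epsI mmul_I_left mmul_Mat)
  then show "\<exists>(P :: (int list \<times> complex) list) (M :: int list list).
              (\<forall>(as, c) \<in> set P. as \<noteq> [] \<and> c \<noteq> 0) \<and> (\<forall>as \<in> set M. as \<noteq> []) \<and>
              distinct (concat (map fst P @ M)) \<and> set (concat (map fst P @ M)) = {1 .. int N} \<and>
              conj_in_Norm N False g
                (mmul N False (listprod N False (map (\<lambda>(as, c). plus_op N False as c) P))
                              (listprod N False (map (minus_op N False) M)))"
    using PM cj by (intro exI[of _ P] exI[of _ M]) simp
qed


end
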